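(* In the setting below, let $H^1$ denote the first cohomology of the complex $C^\bullet$. There is a functorial short exact sequence $$0\to D_K/F^0\to H^1\to (T^{-1}/NT^0)\otimes\mathbb{Q}_p\to 0,$$ where the first map sends $c$ to the class of $(0,0,c)$ and the second sends the class of any cocycle of the form $(0,y,c)$ (every class has such a representative, and then $y\in T^{-1}\otimes\mathbb{Q}_p\subset D^{-1}$ modulo components of other slopes that are coboundaries) to the class of the $D^{-1}$-component of $y$. Moreover there is a well-defined functorial map $H^1\to D_K/(F^0+T^0\otimes\mathbb{Q}_p)$ sending a class to the image of $c$ for any representative $(0,y,c)$, and its composition with $D_K/F^0\to H^1$ is the natural projection $D_K/F^0\to D_K/(F^0+T^0\otimes\mathbb{Q}_p)$.
   Context: Let $K$ be a finite extension of $\mathbb{Q}_p$, $K_0$ its maximal unramified subfield, $\sigma$ the Frobenius of $K_0$. Let $T^i$ ($i\in\mathbb{Z}$, finitely many nonzero) be finitely generated free abelian groups with $\mathbb{Z}$-linear maps $N:T^i\to T^{i-1}$ such that $N\otimes\mathbb{Q}:T^0\otimes\mathbb{Q}\to T^{-1}\otimes\mathbb{Q}$ is injective. Let $D=\bigoplus_i D^i$, $D^i=T^i\otimes_{\mathbb{Z}}K_0$, with $\sigma$-semilinear Frobenius $\varphi$ acting on $D^i$ as $p^i(1\otimes\sigma)$ and $K_0$-linear monodromy $N=N\otimes1:D^i\to D^{i-1}$ (so $N\varphi=p\varphi N$). Let $D_K=D\otimes_{K_0}K$ with a decreasing filtration $F^\bullet$; $T^0\otimes\mathbb{Q}_p\subset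 D^0\subset D_K$. (This models $D=D_{st}(V)$, $D_K=D_{dR}(V)$ for $V=H^k_{\text{ét}}(X_{\bar K},\mathbb{Q}_p(r))$ with $X$ totally degenerate, $T^i=T^{k-2r-2i}_{i+r}$.) The complex $C^\bullet$ is $$D\xrightarrow{x\mapsto(\varphi x-x,\;Nx,\;-x\bmod F^0)}D\oplus D\oplus D_K/F^0\xrightarrow{(a,b,c)\mapsto Na+b-p\varphi b}D,$$ in degrees $0,1,2$; its $H^1$ is the semi-stable cohomology $H^1_{st}(K,V)$. *)

theory Defs
  imports Complex_Main "HOL-Computational_Algebra.Primes"
begin

definition nonarch_abs :: "('a::field \<Rightarrow> real) \<Rightarrow> bool" where
  "nonarch_abs av \<longleftrightarrow>
     (\<forall>x. av x \<ge> 0) \<and> (\<forall>x. av x = 0 \<longleftrightarrow> x = 0) \<and>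
     (\<forall>x y. av (x * y) = av x * av y) \<and>
     (\<forall>x y. av (x + y) \<le> max (av x) (av y))"

text \<open>K_0 (type 'k) with absolute value av and automorphism sigma is a finite unramified
  extension of Q_p and sigma is its (arithmetic) Frobenius: complete, discretely valued with
  uniformizer p and value group p^Z, finite residue field, sigma an isometric field
  automorphism lifting x |-> x^p on the residue field.\<close>
definition unramified_padic :: "nat \<Rightarrow> ('k::field_char_0 \<Rightarrow> real) \<Rightarrow> ('k \<Rightarrow> 'k) \<Rightarrow> bool" where
  "unramified_padic p av \<sigma> \<longleftrightarrow>
     prime p \<and> nonarch_abs av \<and>
     av (of_nat p) = 1 / real p \<and>
     (\<forall>x. x \<noteq> 0 \<longrightarrow> (\<exists>m::int. av x = real p powr (of_int m))) \<and>
     (\<forall>X::nat \<Rightarrow> 'k. (\<forall>e>0. \<exists>M. \<forall>m\<ge>M. \<forall>n\<ge>M. av (X m - X n) < e) \<longrightarrow>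
          (\<exists>L. \<forall>e>0. \<exists>M. \<forall>n\<ge>M. av (X n - L) < e)) \<and>
     (\<exists>R. finite R \<and> (\<forall>x. av x \<le> 1 \<longrightarrow> (\<exists>r\<in>R. av (x - r) < 1))) \<and>
     bij \<sigma> \<and> (\<forall>x y. \<sigma> (x + y) = \<sigma> x + \<sigma> y) \<and> (\<forall>x y. \<sigma> (x * y) = \<sigma> x * \<sigma> y) \<and>
     \<sigma> 1 = 1 \<and> (\<forall>x. av (\<sigma> x) = av x) \<and>
     (\<forall>x. av x \<le> 1 \<longrightarrow> av (\<sigma> x - x ^ p) < 1)"

text \<open>K (type 'K) is a finite field extension of K_0 (via the embedding iota) whose valuation
  extends that of K_0 and whose residue field equals that of K_0, i.e. K_0 is the maximal
  unramified subfield of K.\<close>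
definition max_unram_in :: "('k::field_char_0 \<Rightarrow> real) \<Rightarrow> ('k \<Rightarrow> 'K::field) \<Rightarrow> bool" where
  "max_unram_in av \<iota> \<longleftrightarrow>
     inj \<iota> \<and> (\<forall>x y. \<iota> (x + y) = \<iota> x + \<iota> y) \<and> (\<forall>x y. \<iota> (x * y) = \<iota> x * \<iota> y) \<and> \<iota> 1 = 1 \<and>
     (\<exists>B::'K set. finite B \<and> (\<forall>z. \<exists>c. z = (\<Sum>b\<in>B. \<iota> (c b) * b))) \<and>
     (\<exists>avK. nonarch_abs avK \<and> (\<forall>x. avK (\<iota> x) = av x) \<and>
        (\<forall>z. avK z \<le> 1 \<longrightarrow> (\<exists>x. av x \<le> 1 \<and> avK (z - \<iota> x) < 1)))"

text \<open>T^i = Z^(n i) (free of rank n i) with N : T^(i+1) -> T^i given by the integer matrix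
  Nm (i+1) (entry (j,k), j < n i, k < n (i+1)).  D^i = T^i \<otimes> K_0 = K_0^(n i);
  an element of D is a function d i j with d i j = 0 for j >= n i.
  D_K = D \<otimes> K_0 K is represented in the same way with entries in K.\<close>

definition Dsp :: "(int \<Rightarrow> nat) \<Rightarrow> (int \<Rightarrow> nat \<Rightarrow> 'a::zero) set" where
  "Dsp n = {d. \<forall>i j. n i \<le> j \<longrightarrow> d i j = 0}"

definition ipow :: "'a::field \<Rightarrow> int \<Rightarrow> 'a" where
  "ipow x i = (if 0 \<le> i then x ^ nat i else inverse (x ^ nat (- i)))"

definition phiD :: "nat \<Rightarrow> ('k::field \<Rightarrow> 'k) \<Rightarrow> (int \<Rightarrow> nat \<Rightarrow> 'k) \<Rightarrow> (int \<Rightarrow> nat \<Rightarrow> 'k)" where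
  "phiD p \<sigma> d = (\<lambda>i j. ipow (of_nat p) i * \<sigma> (d i j))"

definition ND :: "(int \<Rightarrow> nat) \<Rightarrow> (int \<Rightarrow> nat \<Rightarrow> nat \<Rightarrow> int) \<Rightarrow> (int \<Rightarrow> nat \<Rightarrow> 'k::field) \<Rightarrow> (int \<Rightarrow> nat \<Rightarrow> 'k)" where
  "ND n Nm d = (\<lambda>i j. if j < n i then (\<Sum>k<n (i + 1). of_int (Nm (i + 1) j k) * d (i + 1) k) else 0)"

definition extK :: "('k \<Rightarrow> 'K) \<Rightarrow> (int \<Rightarrow> nat \<Rightarrow> 'k) \<Rightarrow> (int \<Rightarrow> nat \<Rightarrow> 'K)" where
  "extK \<iota> d = (\<lambda>i j. \<iota> (d i j))"

text \<open>T^i \<otimes> Q_p \<subseteq> D^i \<subseteq> D; Q_p is the fixed field of sigma in K_0.\<close>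
definition TQp :: "(int \<Rightarrow> nat) \<Rightarrow> ('k::field \<Rightarrow> 'k) \<Rightarrow> int \<Rightarrow> (int \<Rightarrow> nat \<Rightarrow> 'k) set" where
  "TQp n \<sigma> i = {d \<in> Dsp n. (\<forall>i' j. i' \<noteq> i \<longrightarrow> d i' j = 0) \<and> (\<forall>j. \<sigma> (d i j) = d i j)}"

definition filtration :: "(int \<Rightarrow> nat) \<Rightarrow> (int \<Rightarrow> (int \<Rightarrow> nat \<Rightarrow> 'K::field) set) \<Rightarrow> bool" where
  "filtration n F \<longleftrightarrow> (\<forall>m. F m \<subseteq> Dsp n \<and> (\<lambda>i j. 0) \<in> F m \<and>
       (\<forall>x\<in>F m. \<forall>y\<in>F m. (\<lambda>i j. x i j + y i j) \<in> F m) \<and>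
       (\<forall>a. \<forall>x\<in>F m. (\<lambda>i j. a * x i j) \<in> F m) \<and> F (m + 1) \<subseteq> F m)"

text \<open>1-cochains (a,b,c) with c \<in> D_K standing for its class in D_K/F^0.
  Cocycle condition: N a + b - p phi b = 0.\<close>
definition cocycle :: "(int \<Rightarrow> nat) \<Rightarrow> (int \<Rightarrow> nat \<Rightarrow> nat \<Rightarrow> int) \<Rightarrow> nat \<Rightarrow> ('k::field \<Rightarrow> 'k) \<Rightarrow> (int \<Rightarrow> nat \<Rightarrow> 'k) \<Rightarrow> (int \<Rightarrow> nat \<Rightarrow> 'k) \<Rightarrow> (int \<Rightarrow> nat \<Rightarrow> 'K::field) \<Rightarrow> bool" where
  "cocycle n Nm p \<sigma> a b c \<longleftrightarrow> a \<in> Dsp n \<and> b \<in> Dsp n \<and> c \<in> Dsp n \<and>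
     (\<forall>i j. ND n Nm a i j + b i j - of_nat p * phiD p \<sigma> b i j = 0)"

definition coboundary :: "(int \<Rightarrow> nat) \<Rightarrow> (int \<Rightarrow> nat \<Rightarrow> nat \<Rightarrow> int) \<Rightarrow> nat \<Rightarrow> ('k::field \<Rightarrow> 'k) \<Rightarrow> ('k \<Rightarrow> 'K::field) \<Rightarrow> (int \<Rightarrow> nat \<Rightarrow> 'K) set \<Rightarrow> (int \<Rightarrow> nat \<Rightarrow> 'k) \<Rightarrow> (int \<Rightarrow> nat \<Rightarrow> 'k) \<Rightarrow> (int \<Rightarrow> nat \<Rightarrow> 'K) \<Rightarrow> bool" where
  "coboundary n Nm p \<sigma> \<iota> F0 a b c \<longleftrightarrow>
     (\<exists>x\<in>Dsp n. \<exists>f\<in>F0. (\<forall>i j. a i j = phiD p \<sigma> x i j - x i j) \<and>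
        (\<forall>i j. b i j = ND n Nm x i j) \<and> (\<forall>i j. c i j = - extK \<iota> x i j + f i j))"

definition cohomologous where
  "cohomologous n Nm p \<sigma> \<iota> F0 a b c a' b' c' \<longleftrightarrow>
     coboundary n Nm p \<sigma> \<iota> F0 (\<lambda>i j. a i j - a' i j) (\<lambda>i j. b i j - b' i j) (\<lambda>i j. c i j - c' i j)"

end

theory Submission
  imports Defs "HOL-Library.FuncSet"
begin


lemma vs_rat: "vector_space (\<lambda>q (x::'k::field_char_0). of_rat q * x)"
  by unfold_locales (auto simp: algebra_simps of_rat_add of_rat_mult)

lemma vs_rat2: "vector_space ((*) :: rat \<Rightarrow> rat \<Rightarrow> rat)"
  by unfold_locales (auto simp: algebra_simps)

lemma transfer_inj:
  fixes A :: "nat \<Rightarrow> nat \<Rightarrow> int" and v :: "nat \<Rightarrow> 'k::field_char_0"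
  assumes Q: "\<forall>w::nat\<Rightarrow>rat. (\<forall>j<m. (\<Sum>k<n. of_int (A j k) * w k) = 0) \<longrightarrow> (\<forall>k<n. w k = 0)"
  and V: "\<forall>j<m. (\<Sum>k<n. of_int (A j k) * v k) = 0" and k: "k<n"
  shows "v k = 0"
proof (rule ccontr)
  assume nz: "v k \<noteq> 0"
  interpret vp: vector_space_pair "\<lambda>q (x::'k). of_rat q * x" "(*) :: rat \<Rightarrow> rat \<Rightarrow> rat"
    unfolding vector_space_pair_def using vs_rat vs_rat2 by blast
  have ind: "vp.vs1.independent {v k}"
    using nz by (simp add: vp.vs1.independent_insert)
  define l where "l = vp.construct {v k} (\<lambda>_. 1)"
  have lin: "Vector_Spaces.linear (\<lambda>q (x::'k). of_rat q * x) (*) l"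
    unfolding l_def by (rule vp.linear_construct[OF ind])
  have l1: "l (v k) = 1" unfolding l_def by (rule vp.construct_basis[OF ind]) simp
  have ladd: "l (x + y) = l x + l y" for x y using lin by (simp add: Vector_Spaces.linear_iff)
  have lsc: "l (of_rat q * x) = q * l x" for q x using lin by (simp add: Vector_Spaces.linear_iff)
  have l0: "l 0 = 0" using ladd[of 0 0] by simp
  have lsum: "l (\<Sum>i\<in>S. f i) = (\<Sum>i\<in>S. l (f i))" for S f
    by (induction S rule: infinite_finite_induct) (auto simp: l0 ladd)
  have lint: "l (of_int c * x) = of_int c * l x" for c x
    using lsc[of "of_int c" x] by simp
  have "\<forall>j<m. (\<Sum>i<n. of_int (A j i) * l (v i)) = 0"
  proof (intro allI impI)
    fix j assume "j < m"
    have "(\<Sum>i<n. of_int (A j i) * l (v i)) = l (\<Sum>i<n. of_int (A j i) * v i)"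
      by (simp add: lsum lint)
    also have "\<dots> = 0" using V \<open>j<m\<close> l0 by simp
    finally show "(\<Sum>i<n. of_int (A j i) * l (v i)) = 0" .
  qed
  then have "l (v k) = 0" using spec[OF Q, of "\<lambda>i. l (v i)"] k by simp
  then show False using l1 by simp
qed


locale padic =
  fixes p :: nat and av :: "'k::field_char_0 \<Rightarrow> real" and \<sigma> :: "'k \<Rightarrow> 'k"
  assumes U: "unramified_padic p av \<sigma>"
begin

lemma pprime: "prime p" using U unfolding unramified_padic_def by blast
lemma p2: "p \<ge> 2" using pprime prime_ge_2_nat by blast
lemma av_nonneg: "av x \<ge> 0" using U unfolding unramified_padic_def nonarch_abs_def by blast
lemma av_0_iff: "av x = 0 \<longleftrightarrow> x = 0" using U unfolding unramified_padic_def nonarch_abs_def by blast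
lemma av_mult: "av (x * y) = av x * av y" using U unfolding unramified_padic_def nonarch_abs_def by blast
lemma av_ultra: "av (x + y) \<le> max (av x) (av y)" using U unfolding unramified_padic_def nonarch_abs_def by blast
lemma av_p: "av (of_nat p) = 1 / real p" using U unfolding unramified_padic_def by blast
lemma av_disc: "x \<noteq> 0 \<Longrightarrow> \<exists>m::int. av x = real p powr (of_int m)" using U unfolding unramified_padic_def by blast
lemma complete_all: "\<forall>X::nat\<Rightarrow>'k. (\<forall>e>0. \<exists>M. \<forall>m\<ge>M. \<forall>n\<ge>M. av (X m - X n) < e) \<longrightarrow>
          (\<exists>L. \<forall>e>0. \<exists>M. \<forall>n\<ge>M. av (X n - L) < e)" using U unfolding unramified_padic_def by blast
lemma complete: fixes X :: "nat \<Rightarrow> 'k" shows "(\<forall>e>0. \<exists>M. \<forall>m\<ge>M. \<forall>n\<ge>M. av (X m - X n) < e) \<Longrightarrow>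
          (\<exists>L. \<forall>e>0. \<exists>M. \<forall>n\<ge>M. av (X n - L) < e)" using spec[OF complete_all, of X] by blast
lemma resid: "\<exists>R. finite R \<and> (\<forall>x. av x \<le> 1 \<longrightarrow> (\<exists>r\<in>R. av (x - r) < 1))" using U unfolding unramified_padic_def by blast
lemma sig_add: "\<sigma> (x + y) = \<sigma> x + \<sigma> y" using U unfolding unramified_padic_def by blast
lemma sig_mult: "\<sigma> (x * y) = \<sigma> x * \<sigma> y" using U unfolding unramified_padic_def by blast
lemma sig_one: "\<sigma> 1 = 1" using U unfolding unramified_padic_def by blast
lemma sig_iso: "av (\<sigma> x) = av x" using U unfolding unramified_padic_def by blast
lemma sig_frob: "av x \<le> 1 \<Longrightarrow> av (\<sigma> x - x ^ p) < 1" using U unfolding unramified_padic_def by blast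

lemma av_0[simp]: "av 0 = 0" using av_0_iff by simp
lemma av_1[simp]: "av 1 = 1"
proof -
  have "av 1 = av 1 * av 1" using av_mult[of 1 1] by simp
  moreover have "av 1 \<noteq> 0" using av_0_iff by simp
  ultimately show ?thesis by (metis mult_cancel_left2)
qed
lemma av_m1: "av (-1) = 1"
proof -
  have "av (-1) * av (-1) = 1" using av_mult[of "-1" "-1"] by simp
  then show ?thesis using av_nonneg[of "-1"]
    by (metis abs_of_nonneg mult_eq_1_iff power2_eq_square real_sqrt_abs real_sqrt_one)
qed
lemma av_minus: "av (- x) = av x" using av_mult[of "-1" x] av_m1 by simp
lemma av_diff_comm: "av (x - y) = av (y - x)" using av_minus[of "x - y"] by simp
lemma av_diff: "av (x - y) \<le> max (av x) (av y)" using av_ultra[of x "-y"] av_minus[of y] by simp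
lemma av_pow: "av (x ^ n) = av x ^ n" by (induction n) (auto simp: av_mult)
lemma av_inverse: "av (inverse x) = inverse (av x)"
proof (cases "x = 0")
  case False
  then have "av x * av (inverse x) = 1" using av_mult[of x "inverse x"] by simp
  from inverse_unique[OF this] show ?thesis by simp
qed simp
lemma av_divide: "av (x / y) = av x / av y" by (simp add: divide_inverse av_mult av_inverse)
lemma av_nat: "av (of_nat m) \<le> 1"
proof (induction m)
  case (Suc m) then show ?case using av_ultra[of 1 "of_nat m"] by simp
qed simp
lemma av_int: "av (of_int m) \<le> 1"
proof (cases m rule: int_cases)
  case (neg n)
  then show ?thesis using av_minus[of "of_nat (Suc n)"] av_nat[of "Suc n"] by simp
qed (simp add: av_nat)
lemma av_trans: "av (x - y) \<le> B \<Longrightarrow> av (y - z) \<le> B \<Longrightarrow> av (x - z) \<le> B"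
  using av_ultra[of "x - y" "y - z"] by simp
lemma av_trans_lt: "av (x - y) < B \<Longrightarrow> av (y - z) < B \<Longrightarrow> av (x - z) < B"
  using av_ultra[of "x - y" "y - z"] by simp
lemma av_sum: "B \<ge> 0 \<Longrightarrow> (\<And>i. i \<in> S \<Longrightarrow> av (f i) \<le> B) \<Longrightarrow> av (sum f S) \<le> B"
proof (induction S rule: infinite_finite_induct)
  case (insert x F)
  have "av (f x) \<le> B" "av (sum f F) \<le> B" using insert by auto
  then show ?case using av_ultra[of "f x" "sum f F"] insert(1,2) by simp
qed auto
lemma av_small: "av x < 1 \<Longrightarrow> av x \<le> 1 / real p"
proof (cases "x = 0")
  case False
  assume a: "av x < 1"
  obtain m :: int where m: "av x = real p powr of_int m" using av_disc[OF False] by blast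
  have p1: "real p > 1" using p2 by simp
  have "m < 0"
  proof (rule ccontr)
    assume "\<not> m < 0"
    then have "real p powr of_int m \<ge> 1" using p1 by (simp add: ge_one_powr_ge_zero)
    then show False using a m by simp
  qed
  then have "real p powr of_int m \<le> real p powr (-1)" using p1 by (intro powr_mono) auto
  then show ?thesis using m p1 by (simp add: powr_minus_divide)
qed simp

lemma av_zero_crit: assumes "\<And>k. av x \<le> (1 / real p) ^ k" shows "x = 0"
proof (rule ccontr)
  assume "x \<noteq> 0"
  then have pos: "av x > 0" using av_nonneg[of x] av_0_iff[of x] by linarith
  have "1 / real p < 1" using p2 by simp
  then obtain k where "(1 / real p) ^ k < av x" using real_arch_pow_inv[OF pos] by blast
  then show False using assms[of k] by simp
qed

lemma av_pow_contr: "av u \<le> 1 \<Longrightarrow> av v \<le> 1 \<Longrightarrow> av (u ^ n - v ^ n) \<le> av (u - v)"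
proof (induction n)
  case 0 then show ?case using av_nonneg by simp
next
  case (Suc n)
  have e: "u ^ Suc n - v ^ Suc n = u * (u ^ n - v ^ n) + (u - v) * v ^ n" by (simp add: algebra_simps)
  have "av (u * (u ^ n - v ^ n)) \<le> av (u - v)"
  proof -
    have "av u * av (u ^ n - v ^ n) \<le> 1 * av (u - v)"
      by (rule mult_mono) (use Suc.IH Suc.prems av_nonneg in auto)
    then show ?thesis by (simp add: av_mult)
  qed
  moreover have "av ((u - v) * v ^ n) \<le> av (u - v)"
    using mult_right_le_one_le[OF av_nonneg[of "u-v"] zero_le_power[OF av_nonneg[of v]] power_le_one[OF av_nonneg[of v] Suc.prems(2)]]
    by (simp add: av_mult av_pow)
  ultimately have "av (u * (u ^ n - v ^ n) + (u - v) * v ^ n) \<le> av (u - v)"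
    using order_trans[OF av_ultra[of "u * (u ^ n - v ^ n)" "(u - v) * v ^ n"]] by simp
  then show ?case by (subst e)
qed

end

context padic begin

definition ihom :: "('k \<Rightarrow> 'k) \<Rightarrow> bool" where
  "ihom g \<longleftrightarrow> (\<forall>x y. g (x+y) = g x + g y) \<and> (\<forall>x y. g (x*y) = g x * g y) \<and> g 1 = 1 \<and> (\<forall>x. av (g x) = av x)"

lemma ihom_sig: "ihom \<sigma>" unfolding ihom_def using sig_add sig_mult sig_one sig_iso by blast

lemma ihom_funpow: "ihom (\<sigma> ^^ k)"
proof (induction k)
  case 0 then show ?case unfolding ihom_def by simp
next
  case (Suc k) then show ?case using ihom_sig unfolding ihom_def by simp
qed

context fixes g assumes hg: "ihom g" begin
lemma hadd: "g (x + y) = g x + g y" using hg unfolding ihom_def by blast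
lemma hmult: "g (x * y) = g x * g y" using hg unfolding ihom_def by blast
lemma h1: "g 1 = 1" using hg unfolding ihom_def by blast
lemma hiso: "av (g x) = av x" using hg unfolding ihom_def by blast
lemma h0: "g 0 = 0" using hadd[of 0 0] by simp
lemma hminus: "g (- x) = - g x" using hadd[of x "-x"] h0 by (simp add: add_eq_0_iff)
lemma hdiff: "g (x - y) = g x - g y" using hadd[of x "-y"] hminus[of y] by simp
lemma hnat: "g (of_nat n) = of_nat n" by (induction n) (simp_all add: h0 hadd h1)
lemma hint: "g (of_int z) = of_int z"
  by (cases z rule: int_cases) (simp_all add: hnat hminus del: of_nat_Suc)
lemma hpow: "g (x ^ n) = g x ^ n" by (induction n) (simp_all add: h1 hmult)
lemma hinv: "g (inverse x) = inverse (g x)"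
proof (cases "x = 0")
  case True then show ?thesis by (simp add: h0)
next
  case False
  then have "g x * g (inverse x) = 1" using hmult[of x "inverse x"] h1 by simp
  from inverse_unique[OF this] show ?thesis by simp
qed
lemma hdivide: "g (x / y) = g x / g y" by (simp add: divide_inverse hmult hinv)
lemma hsum: "g (sum f S) = (\<Sum>i\<in>S. g (f i))"
  by (induction S rule: infinite_finite_induct) (simp_all add: h0 hadd)
end

lemma frob_iter: "av x \<le> 1 \<Longrightarrow> av ((\<sigma> ^^ k) x - x ^ (p ^ k)) < 1"
proof (induction k)
  case 0 then show ?case by simp
next
  case (Suc k)
  define y where "y = (\<sigma> ^^ k) x"
  have ay: "av y \<le> 1" using Suc.prems hiso[OF ihom_funpow] unfolding y_def by simp
  have ax: "av (x ^ (p ^ k)) \<le> 1" using Suc.prems by (simp add: av_pow power_le_one av_nonneg)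
  have 1: "av (\<sigma> y - y ^ p) < 1" using sig_frob[OF ay] .
  have 2: "av (y ^ p - (x ^ (p ^ k)) ^ p) < 1"
    using av_pow_contr[OF ay ax, of p] Suc.IH[OF Suc.prems] unfolding y_def by linarith
  have e: "(x ^ (p ^ k)) ^ p = x ^ (p ^ Suc k)" by (simp add: power_mult[symmetric] mult.commute)
  show ?case using av_trans_lt[OF 1 2] unfolding e y_def by simp
qed

lemma pigeon: "\<exists>f\<ge>1. \<forall>x. av x \<le> 1 \<longrightarrow> av ((\<sigma> ^^ f) x - x) < 1"
proof -
  obtain R where R: "finite R" "\<And>x. av x \<le> 1 \<Longrightarrow> \<exists>r\<in>R. av (x - r) < 1" using resid by blast
  define R0 where "R0 = {r\<in>R. av r \<le> 1}"
  have fR0: "finite R0" using R(1) unfolding R0_def by simp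
  define \<rho> where "\<rho> y = (SOME r. r \<in> R0 \<and> av (y - r) < 1)" for y
  have rho: "\<rho> y \<in> R0 \<and> av (y - \<rho> y) < 1" if hy: "av y \<le> 1" for y
  proof -
    obtain r where r: "r \<in> R" "av (y - r) < 1" using R(2)[OF hy] by blast
    have "av r \<le> 1" using av_diff[of y "y - r"] hy r(2) by simp
    then have "r \<in> R0 \<and> av (y - r) < 1" using r unfolding R0_def by simp
    then show ?thesis unfolding \<rho>_def by (rule someI)
  qed
  define F where "F k = restrict (\<lambda>r. \<rho> ((\<sigma> ^^ k) r)) R0" for k
  have FR: "F k \<in> R0 \<rightarrow>\<^sub>E R0" for k
  proof -
    have "\<rho> ((\<sigma> ^^ k) r) \<in> R0" if "r \<in> R0" for r
      using rho[of "(\<sigma> ^^ k) r"] that hiso[OF ihom_funpow] unfolding R0_def by simp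
    then show ?thesis unfolding F_def by auto
  qed
  have "\<not> inj F"
  proof
    assume "inj F"
    then have "finite (UNIV :: nat set)"
      using inj_on_finite[of F UNIV "R0 \<rightarrow>\<^sub>E R0"] FR finite_PiE[OF fR0, of "\<lambda>_. R0"] fR0 by blast
    then show False by simp
  qed
  then obtain a b where ab: "a \<noteq> b" "F a = F b" unfolding inj_def by blast
  obtain a b where ab: "a < b" "F a = F b"
  proof (cases "a < b")
    case True then show ?thesis using that ab by blast
  next
    case False then show ?thesis using that[of b a] ab by simp
  qed
  show ?thesis
  proof (intro exI[of _ "b - a"] conjI allI impI)
    show "1 \<le> b - a" using ab by simp
    fix x :: 'k assume x: "av x \<le> 1"
    define r where "r = \<rho> x"
    have r: "r \<in> R0" "av (x - r) < 1" using rho[OF x] unfolding r_def by auto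
    have ar: "av r \<le> 1" using r unfolding R0_def by simp
    have c1: "av ((\<sigma>^^a) x - (\<sigma>^^a) r) < 1"
      using r(2) hiso[OF ihom_funpow] hdiff[OF ihom_funpow] by metis
    have c2: "av ((\<sigma>^^a) r - \<rho> ((\<sigma>^^a) r)) < 1"
      using rho[of "(\<sigma>^^a) r"] ar hiso[OF ihom_funpow] by simp
    have "\<rho> ((\<sigma>^^a) r) = \<rho> ((\<sigma>^^b) r)" using fun_cong[OF ab(2), of r] r(1) unfolding F_def by simp
    moreover have c3: "av ((\<sigma>^^b) r - \<rho> ((\<sigma>^^b) r)) < 1"
      using rho[of "(\<sigma>^^b) r"] ar hiso[OF ihom_funpow] by simp
    ultimately have c3': "av (\<rho> ((\<sigma>^^a) r) - (\<sigma>^^b) r) < 1" using av_diff_comm by metis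
    have c4: "av ((\<sigma>^^b) r - (\<sigma>^^b) x) < 1"
      using r(2) hiso[OF ihom_funpow] hdiff[OF ihom_funpow] av_diff_comm by metis
    have "av ((\<sigma>^^a) x - (\<sigma>^^b) x) < 1"
      using av_trans_lt[OF av_trans_lt[OF av_trans_lt[OF c1 c2] c3'] c4] .
    moreover have "(\<sigma>^^b) x = (\<sigma>^^a) ((\<sigma>^^(b-a)) x)"
      using ab(1) funpow_add[of a "b - a" \<sigma>] by simp
    ultimately have "av ((\<sigma>^^a) (x - (\<sigma>^^(b-a)) x)) < 1" using hdiff[OF ihom_funpow] by metis
    then show "av ((\<sigma> ^^ (b - a)) x - x) < 1" using hiso[OF ihom_funpow] av_diff_comm by metis
  qed
qed

lemma binom_step:
  assumes u: "av u \<le> 1" and v: "av v \<le> 1" and d: "av (u - v) \<le> (1 / real p) ^ Suc m"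
  shows "av (u ^ p - v ^ p) \<le> (1 / real p) ^ Suc (Suc m)"
proof -
  define r where "r = 1 / real p"
  have r0: "0 \<le> r" "r \<le> 1" using p2 unfolding r_def by auto
  define d where "d = u - v"
  define D where "D = av d"
  have D: "0 \<le> D" "D \<le> r ^ Suc m" using d av_nonneg unfolding D_def d_def r_def by auto
  have Dr: "D \<le> r" using D(2) power_decreasing[of 1 "Suc m" r] r0 by simp
  have D1: "D \<le> 1" using Dr r0 by simp
  have "u ^ p = (d + v) ^ p" unfolding d_def by simp
  also have "\<dots> = (\<Sum>k\<le>p. of_nat (p choose k) * d ^ k * v ^ (p - k))" by (rule binomial_ring)
  also have "{..p} = insert 0 {1..p}" by auto
  finally have "u ^ p - v ^ p = (\<Sum>k\<in>{1..p}. of_nat (p choose k) * d ^ k * v ^ (p - k))" by simp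
  moreover have "av (of_nat (p choose k) * d ^ k * v ^ (p - k)) \<le> r ^ Suc (Suc m)" if k: "k \<in> {1..p}" for k
  proof -
    have avv: "av (v ^ (p - k)) \<le> 1" using v by (simp add: av_pow power_le_one av_nonneg)
    have "av (of_nat (p choose k) * d ^ k) \<le> r * D"
    proof (cases "k = p")
      case True
      have "D ^ p \<le> D ^ 2" using power_decreasing[of 2 p D] p2 D D1 by simp
      also have "\<dots> \<le> r * D" using Dr D by (simp add: power2_eq_square mult_right_mono)
      finally show ?thesis using True by (simp add: av_mult av_pow D_def)
    next
      case False
      then have "p dvd (p choose k)" using k p2 pprime by (intro dvd_choose_prime) auto
      then obtain c where c: "p choose k = p * c" by blast
      have "av (of_nat (p choose k) :: 'k) \<le> r"
        using c av_mult[of "of_nat p" "of_nat c"] av_p av_nat[of c] r0 unfolding r_def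
        by (simp add: divide_right_mono)
      moreover have "D ^ k \<le> D" using power_decreasing[of 1 k D] k D D1 by simp
      ultimately show ?thesis using D r0 by (simp add: av_mult av_pow D_def mult_mono av_nonneg)
    qed
    then have "av (of_nat (p choose k) * d ^ k) * av (v ^ (p - k)) \<le> r * D * 1"
      using avv D r0 by (intro mult_mono) (auto simp: av_nonneg)
    then have "av (of_nat (p choose k) * d ^ k * v ^ (p - k)) \<le> r * D * 1"
      by (simp add: av_mult)
    also have "\<dots> \<le> r * r ^ Suc m" using D r0 by (simp add: mult_left_mono)
    finally show ?thesis by simp
  qed
  ultimately have "av (u ^ p - v ^ p) \<le> r ^ Suc (Suc m)"
    using av_sum[of "r ^ Suc (Suc m)" "{1..p}"] r0 by (simp only: zero_le_power)
  then show ?thesis unfolding r_def .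
qed

end

context padic begin

context fixes f assumes f1: "f \<ge> 1" and hf: "\<forall>x. av x \<le> 1 \<longrightarrow> av ((\<sigma>^^f) x - x) < 1"
begin

lemma powQ: "av x \<le> 1 \<Longrightarrow> av (x ^ (p ^ f) - x) < 1"
  using av_trans_lt[of "x ^ (p ^ f)" "(\<sigma>^^f) x" 1 x] frob_iter[of x f] hf av_diff_comm by metis

lemma int_pow: "av x \<le> 1 \<Longrightarrow> av (x ^ n) \<le> 1" by (simp add: av_pow power_le_one av_nonneg)

lemma stepQ:
  assumes u: "av u \<le> 1" and v: "av v \<le> 1" and d: "av (u - v) \<le> (1 / real p) ^ Suc m"
  shows "av (u ^ (p ^ f) - v ^ (p ^ f)) \<le> (1 / real p) ^ Suc (Suc m)"
proof -
  have e: "p ^ f = p * p ^ (f - 1)" using f1 by (metis Suc_diff_1 less_le_trans power_Suc zero_less_one)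
  have "av ((u ^ p) ^ (p ^ (f - 1)) - (v ^ p) ^ (p ^ (f - 1))) \<le> av (u ^ p - v ^ p)"
    using av_pow_contr int_pow u v by blast
  also have "\<dots> \<le> (1 / real p) ^ Suc (Suc m)" using binom_step[OF u v d] .
  finally show ?thesis unfolding e power_mult .
qed

lemma teich: assumes x: "av x \<le> 1" shows "\<exists>\<tau>. av \<tau> \<le> 1 \<and> \<tau> ^ (p ^ f) = \<tau> \<and> av (\<tau> - x) < 1"
proof -
  define r where "r = 1 / real p"
  have r0: "0 \<le> r" "r < 1" using p2 unfolding r_def by auto
  define s where "s k = x ^ ((p ^ f) ^ k)" for k
  have sint: "av (s k) \<le> 1" for k unfolding s_def using int_pow[OF x] .
  have ssuc: "s (Suc k) = (s k) ^ (p ^ f)" for k unfolding s_def by (simp add: power_mult[symmetric] mult.commute)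
  have sstep: "av (s (Suc k) - s k) \<le> r ^ Suc k" for k
  proof (induction k)
    case 0 then show ?case using av_small[OF powQ[OF x]] unfolding s_def r_def by simp
  next
    case (Suc k)
    show ?case unfolding ssuc[of "Suc k"] ssuc[of k, symmetric]
      using stepQ[OF sint sint Suc[unfolded r_def]] unfolding r_def ssuc[of k] by simp
  qed
  have scau: "av (s (n + d) - s n) \<le> r ^ Suc n" for n d
  proof (induction d)
    case 0 then show ?case using r0 by simp
  next
    case (Suc d)
    have "av (s (Suc (n + d)) - s (n + d)) \<le> r ^ Suc n"
      using sstep[of "n + d"] power_decreasing[of "Suc n" "Suc (n + d)" r] r0 by simp
    then show ?case using av_trans[OF _ Suc] by simp
  qed
  have scau2: "av (s m - s n) \<le> r ^ Suc M" if "m \<ge> M" "n \<ge> M" for m n M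
  proof -
    have "av (s m - s M) \<le> r ^ Suc M" using scau[of M "m - M"] that by simp
    moreover have "av (s M - s n) \<le> r ^ Suc M" using scau[of M "n - M"] that av_diff_comm by simp
    ultimately show ?thesis using av_trans by blast
  qed
  have "\<forall>e>0. \<exists>M. \<forall>m\<ge>M. \<forall>n\<ge>M. av (s m - s n) < e"
  proof (intro allI impI)
    fix e :: real assume "e > 0"
    then obtain M where M: "r ^ M < e" using real_arch_pow_inv r0 by blast
    have "r ^ Suc M \<le> r ^ M" using power_decreasing[of M "Suc M" r] r0 by simp
    then show "\<exists>M. \<forall>m\<ge>M. \<forall>n\<ge>M. av (s m - s n) < e" using scau2 M by (meson le_less_trans)
  qed
  then obtain \<tau> where lim: "\<forall>e>0. \<exists>M. \<forall>n\<ge>M. av (s n - \<tau>) < e" using complete by blast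
  obtain M1 where M1: "\<forall>n\<ge>M1. av (s n - \<tau>) < 1" using lim by force
  have t1: "av \<tau> \<le> 1"
  proof -
    have "av (s M1 - \<tau>) < 1" using M1 by simp
    then show ?thesis using av_diff[of "s M1" "s M1 - \<tau>"] sint[of M1] by simp
  qed
  have t2: "av (\<tau> - x) < 1"
  proof -
    have "av (\<tau> - s M1) < 1" using M1 av_diff_comm by simp
    moreover have "av (s M1 - s 0) \<le> r ^ Suc 0" using scau[of 0 M1] by simp
    then have "av (s M1 - x) < 1" using r0 unfolding s_def by simp
    ultimately show ?thesis using av_trans_lt by blast
  qed
  have t3: "\<tau> ^ (p ^ f) = \<tau>"
  proof -
    have "av (\<tau> ^ (p ^ f) - \<tau>) < e" if e: "e > 0" for e
    proof -
      obtain M where M: "\<forall>n\<ge>M. av (s n - \<tau>) < e" using lim e by blast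
      have "av (\<tau> ^ (p ^ f) - s M ^ (p ^ f)) \<le> av (\<tau> - s M)" using av_pow_contr[OF t1 sint] .
      then have a: "av (\<tau> ^ (p ^ f) - s (Suc M)) < e" using M av_diff_comm ssuc by (metis order.refl le_less_trans)
      have b: "av (s (Suc M) - \<tau>) < e" using M by simp
      show ?thesis using av_trans_lt[OF a b] .
    qed
    then have "av (\<tau> ^ (p ^ f) - \<tau>) \<le> 0" by (metis not_le order_less_irrefl)
    then show ?thesis using av_nonneg[of "\<tau> ^ (p ^ f) - \<tau>"] av_0_iff by simp
  qed
  show ?thesis using t1 t2 t3 by blast
qed

lemma uniq:
  assumes u: "av u \<le> 1" and v: "av v \<le> 1" and uq: "u ^ (p ^ f) = u" and vq: "v ^ (p ^ f) = v"
    and c: "av (u - v) < 1"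
  shows "u = v"
proof -
  have k: "av (u - v) \<le> (1 / real p) ^ Suc k" for k
  proof (induction k)
    case 0 then show ?case using av_small[OF c] by simp
  next
    case (Suc k) then show ?case using stepQ[OF u v Suc] uq vq by simp
  qed
  have "av (u - v) \<le> (1 / real p) ^ k" for k
    using k[of k] power_decreasing[of k "Suc k" "1 / real p"] p2 by simp
  then show ?thesis using av_zero_crit[of "u - v"] by simp
qed

lemma fix_int_aux: "\<forall>x. av x \<le> 1 \<longrightarrow> av ((\<sigma>^^f) x - x) \<le> (1 / real p) ^ k"
proof (induction k)
  case 0 then show ?case using av_diff hiso[OF ihom_funpow] by (metis max.absorb_iff2 max_def power_0 order_trans)
next
  case (Suc k)
  show ?case
  proof (intro allI impI)
    fix x :: 'k assume x: "av x \<le> 1"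
    let ?g = "\<sigma>^^f"
    obtain \<tau> where t: "av \<tau> \<le> 1" "\<tau> ^ (p ^ f) = \<tau>" "av (\<tau> - x) < 1" using teich[OF x] by blast
    have gt: "?g \<tau> = \<tau>"
    proof (rule uniq)
      show "av (?g \<tau>) \<le> 1" using t hiso[OF ihom_funpow] by simp
      show "?g \<tau> ^ (p ^ f) = ?g \<tau>" using t(2) hpow[OF ihom_funpow] by metis
      show "av (?g \<tau> - \<tau>) < 1" using hf t by blast
    qed (use t in auto)
    define x1 where "x1 = (x - \<tau>) / of_nat p"
    have pnz: "(of_nat p :: 'k) \<noteq> 0" using p2 by simp
    have ax1: "av x1 \<le> 1"
    proof -
      have "av (x - \<tau>) \<le> 1 / real p" using av_small t(3) av_diff_comm by simp
      then show ?thesis unfolding x1_def av_divide av_p using p2 by (simp add: field_simps)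
    qed
    have xe: "x = \<tau> + of_nat p * x1" unfolding x1_def using pnz by simp
    have "?g x - x = of_nat p * (?g x1 - x1)"
      unfolding xe by (simp add: hadd[OF ihom_funpow] hmult[OF ihom_funpow] hnat[OF ihom_funpow] gt algebra_simps)
    then have "av (?g x - x) = (1 / real p) * av (?g x1 - x1)" by (simp add: av_mult av_p)
    also have "\<dots> \<le> (1 / real p) * (1 / real p) ^ k" using Suc ax1 p2 by (intro mult_left_mono) auto
    finally show "av (?g x - x) \<le> (1 / real p) ^ Suc k" by simp
  qed
qed

lemma fix_all: "(\<sigma>^^f) x = x"
proof (cases "av x \<le> 1")
  case True then show ?thesis using fix_int_aux av_zero_crit[of "(\<sigma>^^f) x - x"] by simp
next
  case False
  then have "x \<noteq> 0" by auto
  then have "av (inverse x) \<le> 1" using False av_inverse av_nonneg by (simp add: inverse_le_1_iff)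
  then have "(\<sigma>^^f) (inverse x) = inverse x" using fix_int_aux av_zero_crit[of "(\<sigma>^^f) (inverse x) - inverse x"] by simp
  then show ?thesis using hinv[OF ihom_funpow] by (metis inverse_inverse_eq)
qed

end

lemma sigma_finite_order: "\<exists>f\<ge>1. \<forall>x. (\<sigma>^^f) x = x"
  using pigeon fix_all by blast

end


lemma ipow_0[simp]: "ipow x 0 = 1" by (simp add: ipow_def)
lemma ipow_nz: "(x::'a::field) \<noteq> 0 \<Longrightarrow> ipow x i \<noteq> 0" by (simp add: ipow_def)
lemma ipow_suc: assumes "(x::'a::field) \<noteq> 0" shows "x * ipow x i = ipow x (i + 1)"
proof (cases "i \<ge> 0")
  case True
  then have "nat (i + 1) = Suc (nat i)" by simp
  then show ?thesis using True by (simp add: ipow_def)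
next
  case False
  show ?thesis
  proof (cases "i = -1")
    case True then show ?thesis using assms by (simp add: ipow_def)
  next
    case F2: False
    then have "nat (- i) = Suc (nat (- (i + 1)))" "\<not> 0 \<le> i + 1" using False by auto
    then show ?thesis using assms False by (simp add: ipow_def field_simps)
  qed
qed

context padic begin

abbreviation lam :: "int \<Rightarrow> 'k" where "lam i \<equiv> ipow (of_nat p) i"

lemma pnz: "(of_nat p :: 'k) \<noteq> 0" using p2 by simp
lemma lam_nz: "lam i \<noteq> 0" using ipow_nz[OF pnz] .
lemma lam_suc: "of_nat p * lam i = lam (i + 1)" using ipow_suc[OF pnz] .
lemma lam_m1: "of_nat p * lam (-1) = 1" using lam_suc[of "-1"] by simp

lemma hlam: assumes "ihom g" shows "g (lam i) = lam i"
  by (simp add: ipow_def hpow[OF assms] hinv[OF assms] hnat[OF assms])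

lemma lam_pow_ne1: assumes "i \<noteq> 0" "f \<ge> 1" shows "lam i ^ f \<noteq> 1"
proof (cases "i > 0")
  case True
  have "nat i * f > 0" using True assms(2) by simp
  then have "p ^ (nat i * f) > 1" using p2 by (intro one_less_power) auto
  then have "(of_nat (p ^ (nat i * f)) :: 'k) \<noteq> 1" by (metis of_nat_eq_1_iff less_irrefl)
  then show ?thesis using True by (simp add: ipow_def power_mult)
next
  case False
  then have i: "nat (-i) > 0" using assms by simp
  have "nat (-i) * f > 0" using i assms(2) by simp
  then have "p ^ (nat (-i) * f) > 1" using p2 by (intro one_less_power) auto
  then have "(of_nat (p ^ (nat (-i) * f)) :: 'k) \<noteq> 1" by (metis of_nat_eq_1_iff less_irrefl)
  then show ?thesis using False assms(1) by (simp add: ipow_def power_mult power_inverse)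
qed

context fixes f assumes f1: "f \<ge> 1" and ford: "\<And>x. (\<sigma>^^f) x = x"
begin

lemma fixA: assumes i: "i \<noteq> 0" and e: "lam i * \<sigma> x = x" shows "x = 0"
proof -
  have it: "x = lam i ^ m * (\<sigma>^^m) x" for m
  proof (induction m)
    case 0 then show ?case by simp
  next
    case (Suc m)
    have "(\<sigma>^^m) x = (\<sigma>^^m) (lam i * \<sigma> x)" using e by simp
    also have "\<dots> = lam i * (\<sigma>^^Suc m) x"
      by (simp add: hmult[OF ihom_funpow] hlam[OF ihom_funpow] funpow_Suc_right del: funpow.simps)
    finally show ?case using Suc by (metis mult.assoc power_Suc2)
  qed
  then have "x = lam i ^ f * x" using ford by metis
  then have "(lam i ^ f - 1) * x = 0" by (simp add: algebra_simps)
  then show ?thesis using lam_pow_ne1[OF i f1] by simp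
qed

lemma solB: assumes i: "i \<noteq> 0"
  shows "lam i * \<sigma> (inverse (lam i ^ f - 1) * (\<Sum>m<f. lam i ^ m * (\<sigma>^^m) z))
         - inverse (lam i ^ f - 1) * (\<Sum>m<f. lam i ^ m * (\<sigma>^^m) z) = z"
proof -
  define c where "c = inverse (lam i ^ f - 1)"
  have sc: "\<sigma> c = c" unfolding c_def using hlam[OF ihom_sig] by (simp add: hinv[OF ihom_sig] hdiff[OF ihom_sig] hpow[OF ihom_sig] sig_one)
  have "lam i * \<sigma> (\<Sum>m<f. lam i ^ m * (\<sigma>^^m) z) = (\<Sum>m<f. lam i ^ Suc m * (\<sigma>^^Suc m) z)"
    by (simp add: hsum[OF ihom_sig] hmult[OF ihom_sig] hpow[OF ihom_sig] hlam[OF ihom_sig] sum_distrib_left mult.assoc)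
  then have "lam i * \<sigma> (\<Sum>m<f. lam i ^ m * (\<sigma>^^m) z) - (\<Sum>m<f. lam i ^ m * (\<sigma>^^m) z)
      = (\<Sum>m<f. lam i ^ Suc m * (\<sigma>^^Suc m) z - lam i ^ m * (\<sigma>^^m) z)"
    by (simp add: sum_subtractf)
  also have "\<dots> = lam i ^ f * (\<sigma>^^f) z - z"
    using sum_lessThan_telescope[of "\<lambda>m. lam i ^ m * (\<sigma>^^m) z" f] by (simp del: funpow.simps)
  also have "\<dots> = (lam i ^ f - 1) * z" using ford by (simp add: algebra_simps)
  finally have key: "lam i * \<sigma> (\<Sum>m<f. lam i ^ m * (\<sigma>^^m) z) - (\<Sum>m<f. lam i ^ m * (\<sigma>^^m) z) = (lam i ^ f - 1) * z" .
  have "lam i * \<sigma> (c * (\<Sum>m<f. lam i ^ m * (\<sigma>^^m) z)) - c * (\<Sum>m<f. lam i ^ m * (\<sigma>^^m) z)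
      = c * (lam i * \<sigma> (\<Sum>m<f. lam i ^ m * (\<sigma>^^m) z) - (\<Sum>m<f. lam i ^ m * (\<sigma>^^m) z))"
    by (simp add: sig_mult sc algebra_simps)
  also have "\<dots> = z" unfolding key c_def using lam_pow_ne1[OF i f1] by simp
  finally show ?thesis unfolding c_def .
qed

definition Tr :: "'k \<Rightarrow> 'k" where "Tr z = (\<Sum>m<f. (\<sigma>^^m) z)"

lemma Tr_cob: "Tr (\<sigma> b - b) = 0"
proof -
  have "Tr (\<sigma> b - b) = (\<Sum>m<f. (\<sigma>^^Suc m) b - (\<sigma>^^m) b)"
    unfolding Tr_def by (simp add: hdiff[OF ihom_funpow] funpow_Suc_right del: funpow.simps)
  also have "\<dots> = (\<sigma>^^f) b - b" using sum_lessThan_telescope[of "\<lambda>m. (\<sigma>^^m) b" f] by (simp del: funpow.simps)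
  finally show ?thesis using ford by simp
qed

lemma Tr_lin: "Tr (\<Sum>k<N. of_int (A k) * v k) = (\<Sum>k<N. of_int (A k) * Tr (v k))"
  unfolding Tr_def by (simp add: hsum[OF ihom_funpow] hmult[OF ihom_funpow] hint[OF ihom_funpow] sum_distrib_left sum.swap[of _ "{..<f}"])

lemma solC: assumes "Tr z = 0"
  shows "\<sigma> (- inverse (of_nat f) * (\<Sum>m<f. \<Sum>l<m. (\<sigma>^^l) z)) - (- inverse (of_nat f) * (\<Sum>m<f. \<Sum>l<m. (\<sigma>^^l) z)) = z"
proof -
  have inner: "\<sigma> (\<Sum>l<m. (\<sigma>^^l) z) - (\<Sum>l<m. (\<sigma>^^l) z) = (\<sigma>^^m) z - z" for m
  proof -
    have "\<sigma> (\<Sum>l<m. (\<sigma>^^l) z) - (\<Sum>l<m. (\<sigma>^^l) z) = (\<Sum>l<m. (\<sigma>^^Suc l) z - (\<sigma>^^l) z)"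
      by (simp add: hsum[OF ihom_sig] sum_subtractf)
    also have "\<dots> = (\<sigma>^^m) z - z" using sum_lessThan_telescope[of "\<lambda>m. (\<sigma>^^m) z" m] by (simp del: funpow.simps)
    finally show ?thesis .
  qed
  have "\<sigma> (\<Sum>m<f. \<Sum>l<m. (\<sigma>^^l) z) - (\<Sum>m<f. \<Sum>l<m. (\<sigma>^^l) z) = (\<Sum>m<f. (\<sigma>^^m) z - z)"
    using inner by (simp add: hsum[OF ihom_sig] sum_subtractf[symmetric])
  also have "\<dots> = Tr z - of_nat f * z" unfolding Tr_def by (simp add: sum_subtractf)
  also have "\<dots> = - of_nat f * z" using assms by simp
  finally have key: "\<sigma> (\<Sum>m<f. \<Sum>l<m. (\<sigma>^^l) z) - (\<Sum>m<f. \<Sum>l<m. (\<sigma>^^l) z) = - of_nat f * z" .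
  have sf: "\<sigma> (- inverse (of_nat f)) = - inverse (of_nat f)"
    by (simp add: hminus[OF ihom_sig] hinv[OF ihom_sig] hnat[OF ihom_sig])
  have fnz: "(of_nat f :: 'k) \<noteq> 0" using f1 by simp
  have "\<sigma> (- inverse (of_nat f) * (\<Sum>m<f. \<Sum>l<m. (\<sigma>^^l) z)) - (- inverse (of_nat f) * (\<Sum>m<f. \<Sum>l<m. (\<sigma>^^l) z))
     = - inverse (of_nat f) * (\<sigma> (\<Sum>m<f. \<Sum>l<m. (\<sigma>^^l) z) - (\<Sum>m<f. \<Sum>l<m. (\<sigma>^^l) z))"
    by (simp only: sig_mult sf) (simp add: algebra_simps)
  also have "\<dots> = z" unfolding key using fnz by simp
  finally show ?thesis .
qed

end
end


lemma ND_zero: "ND n Nm (\<lambda>i j. 0 :: 'k::field) = (\<lambda>i j. 0)"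
  by (simp add: ND_def fun_eq_iff)

context padic begin

context fixes f :: nat and \<iota> :: "'k \<Rightarrow> 'K::field" and n :: "int \<Rightarrow> nat" and Nm :: "int \<Rightarrow> nat \<Rightarrow> nat \<Rightarrow> int"
  and F :: "int \<Rightarrow> (int \<Rightarrow> nat \<Rightarrow> 'K) set"
  assumes f1: "f \<ge> 1" and ford: "\<And>x. (\<sigma>^^f) x = x"
  and iadd: "\<And>x y. \<iota> (x + y) = \<iota> x + \<iota> y"
  and Ninj: "\<forall>v::nat \<Rightarrow> rat. (\<forall>j<n (-1). (\<Sum>k<n 0. of_int (Nm 0 j k) * v k) = 0)
                  \<longrightarrow> (\<forall>k<n 0. v k = 0)"
  and F0: "(\<lambda>i j. 0) \<in> F 0"
begin

lemma i0: "\<iota> 0 = 0"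
proof -
  have "\<iota> 0 + \<iota> 0 = \<iota> 0 + 0" using iadd[of 0 0] by simp
  then show ?thesis by (simp only: add_left_cancel)
qed
lemma ineg: "\<iota> (- x) = - \<iota> x" using iadd[of x "-x"] i0 by (simp add: add_eq_0_iff)

lemma L_fixed: assumes x: "x \<in> Dsp n" and e: "\<forall>i j. (0::'k) = phiD p \<sigma> x i j - x i j"
  shows "x \<in> TQp n \<sigma> 0"
proof -
  have l: "lam i * \<sigma> (x i j) = x i j" for i j using e by (simp add: phiD_def)
  have "(\<forall>i' j. i' \<noteq> 0 \<longrightarrow> x i' j = 0)"
  proof (intro allI impI)
    fix i' j assume "i' \<noteq> (0::int)"
    then show "x i' j = 0" by (rule fixA[OF f1 ford _ l])
  qed
  moreover have "\<forall>j. \<sigma> (x 0 j) = x 0 j" using l[of 0] by simp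
  ultimately have "(\<forall>i' j. i' \<noteq> 0 \<longrightarrow> x i' j = 0) \<and> (\<forall>j. \<sigma> (x 0 j) = x 0 j)" by blast
  then show ?thesis using x unfolding TQp_def by blast
qed

lemma L_ND_T0: assumes "t \<in> TQp n \<sigma> 0" "i \<noteq> -1" shows "ND n Nm t i j = 0"
proof -
  have "i + 1 \<noteq> 0" using assms(2) by simp
  then have "t (i + 1) k = 0" for k using assms(1) unfolding TQp_def by blast
  then show ?thesis by (simp add: ND_def)
qed

lemma L_transfer: fixes x :: "int \<Rightarrow> nat \<Rightarrow> 'k" assumes x: "x \<in> Dsp n" and e: "\<forall>j. ND n Nm x (-1) j = 0" shows "x 0 k = 0"
proof (cases "k < n 0")
  case True
  have "\<forall>j<n (-1). (\<Sum>k<n 0. of_int (Nm 0 j k) * x 0 k) = 0"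
  proof (intro allI impI)
    fix j assume j: "j < n (-1)"
    have m: "(-1::int) + 1 = 0" by simp
    show "(\<Sum>k<n 0. of_int (Nm 0 j k) * x 0 k) = 0" using e[rule_format, of j] j unfolding ND_def m by simp
  qed
  from transfer_inj[where v = "x 0" and A = "Nm 0" and k = k, OF Ninj this True] show ?thesis .
next
  case False then show ?thesis using x unfolding Dsp_def by simp
qed

lemma L_cocy0: assumes "cocycle n Nm p \<sigma> (\<lambda>i j. 0) y c"
  shows "\<forall>i j. i \<noteq> -1 \<longrightarrow> y i j = 0" and "\<forall>j. \<sigma> (y (-1) j) = y (-1) j"
proof -
  have e: "y i j - of_nat p * (lam i * \<sigma> (y i j)) = 0" for i j
    using assms unfolding cocycle_def ND_zero by (simp add: phiD_def)
  have e2: "lam (i + 1) * \<sigma> (y i j) = y i j" for i j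
  proof -
    have "y i j = of_nat p * (lam i * \<sigma> (y i j))" using e[of i j] by simp
    then show ?thesis by (simp add: lam_suc[symmetric] mult.assoc)
  qed
  show "\<forall>i j. i \<noteq> -1 \<longrightarrow> y i j = 0"
  proof (intro allI impI)
    fix i :: int and j :: nat assume "i \<noteq> -1"
    then have "i + 1 \<noteq> 0" by simp
    then show "y i j = 0" by (rule fixA[OF f1 ford _ e2[of i j]])
  qed
  have m: "(-1::int) + 1 = 0" by simp
  show "\<forall>j. \<sigma> (y (-1) j) = y (-1) j"
  proof
    fix j show "\<sigma> (y (-1) j) = y (-1) j" using e2[of "-1" j] unfolding m ipow_0 by simp
  qed
qed


lemma s0: "\<sigma> 0 = 0" by (rule h0[OF ihom_sig])

lemma L_rep: assumes coc: "cocycle n Nm p \<sigma> a b c"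
  shows "\<exists>y c'. cocycle n Nm p \<sigma> (\<lambda>i j. 0) y c' \<and> cohomologous n Nm p \<sigma> \<iota> (F 0) a b c (\<lambda>i j. 0) y c'"
proof -
  have aD: "a \<in> Dsp n" and bD: "b \<in> Dsp n" and cD: "c \<in> Dsp n"
    and cond: "\<And>i j. ND n Nm a i j + b i j - of_nat p * phiD p \<sigma> b i j = 0"
    using coc unfolding cocycle_def by auto
  have m: "(-1::int) + 1 = 0" by simp
  define sol :: "int \<Rightarrow> 'k \<Rightarrow> 'k" where "sol i z = (if i = 0
      then - inverse (of_nat f) * (\<Sum>m<f. \<Sum>l<m. (\<sigma>^^l) z)
      else inverse (lam i ^ f - 1) * (\<Sum>m<f. lam i ^ m * (\<sigma>^^m) z))" for i z
  define x where "x = (\<lambda>i j. if j < n i then sol i (a i j) else 0)"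
  have xD: "x \<in> Dsp n" unfolding x_def Dsp_def by simp
  have "\<forall>j<n (-1). (\<Sum>k<n 0. of_int (Nm 0 j k) * Tr f (a 0 k)) = 0"
  proof (intro allI impI)
    fix j assume j: "j < n (-1)"
    have "ND n Nm a (-1) j + b (-1) j - of_nat p * phiD p \<sigma> b (-1) j = 0" by (rule cond)
    then have "(\<Sum>k<n 0. of_int (Nm 0 j k) * a 0 k) = \<sigma> (b (-1) j) - b (-1) j"
      using j lam_m1 unfolding ND_def phiD_def m by (simp add: mult.assoc[symmetric] algebra_simps)
    then have "Tr f (\<Sum>k<n 0. of_int (Nm 0 j k) * a 0 k) = 0" using Tr_cob[OF f1 ford] by simp
    then show "(\<Sum>k<n 0. of_int (Nm 0 j k) * Tr f (a 0 k)) = 0" unfolding Tr_lin[OF f1 ford] .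
  qed
  note trz = transfer_inj[where v = "\<lambda>k. Tr f (a 0 k)" and A = "Nm 0", OF Ninj this]
  have xs: "a i j = phiD p \<sigma> x i j - x i j" for i j
  proof (cases "j < n i")
    case True
    show ?thesis
    proof (cases "i = 0")
      case True
      with \<open>j < n i\<close> have tz: "Tr f (a 0 j) = 0" using trz by simp
      show ?thesis using solC[OF f1 ford tz] True \<open>j < n i\<close> unfolding phiD_def x_def sol_def by simp
    next
      case False
      show ?thesis using solB[OF f1 ford False, of "a i j"] False \<open>j < n i\<close> unfolding phiD_def x_def sol_def by simp
    qed
  next
    case False
    then show ?thesis using aD unfolding Dsp_def phiD_def x_def by (simp add: s0)
  qed
  define y where "y = (\<lambda>i j. b i j - ND n Nm x i j)"
  define c' where "c' = (\<lambda>i j. c i j + extK \<iota> x i j)"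
  have key: "of_nat p * phiD p \<sigma> (ND n Nm x) i j = ND n Nm a i j + ND n Nm x i j" for i j
  proof (cases "j < n i")
    case True
    have "of_nat p * phiD p \<sigma> (ND n Nm x) i j
        = (\<Sum>k<n (i + 1). of_int (Nm (i + 1) j k) * (lam (i + 1) * \<sigma> (x (i + 1) k)))"
      using True unfolding phiD_def ND_def lam_suc[symmetric]
      by (simp add: hsum[OF ihom_sig] sig_mult hint[OF ihom_sig] sum_distrib_left algebra_simps)
    also have "\<dots> = (\<Sum>k<n (i + 1). of_int (Nm (i + 1) j k) * (a (i + 1) k + x (i + 1) k))"
      using xs unfolding phiD_def by (simp add: algebra_simps)
    also have "\<dots> = ND n Nm a i j + ND n Nm x i j"
      using True unfolding ND_def by (simp add: distrib_left sum.distrib)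
    finally show ?thesis .
  next
    case False then show ?thesis unfolding phiD_def ND_def by (simp add: s0)
  qed
  have "cocycle n Nm p \<sigma> (\<lambda>i j. 0) y c'"
    unfolding cocycle_def ND_zero
  proof (intro conjI allI)
    show "(\<lambda>i j. 0) \<in> Dsp n" unfolding Dsp_def by simp
    show "y \<in> Dsp n" using bD unfolding Dsp_def y_def ND_def by simp
    show "c' \<in> Dsp n" using cD xD unfolding Dsp_def c'_def extK_def by (simp add: i0)
    fix i j
    have hy: "of_nat p * phiD p \<sigma> y i j = of_nat p * phiD p \<sigma> b i j - of_nat p * phiD p \<sigma> (ND n Nm x) i j"
      unfolding y_def phiD_def by (simp add: hdiff[OF ihom_sig] algebra_simps)
    have yij: "y i j = b i j - ND n Nm x i j" unfolding y_def by simp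
    show "0 + y i j - of_nat p * phiD p \<sigma> y i j = 0"
      unfolding hy yij key[of i j] using cond[of i j] by (simp add: algebra_simps)
  qed
  moreover have "cohomologous n Nm p \<sigma> \<iota> (F 0) a b c (\<lambda>i j. 0) y c'"
    unfolding cohomologous_def coboundary_def
    using xD F0 xs by (intro bexI[of _ x] bexI[of _ "\<lambda>i j. 0"]) (auto simp: y_def c'_def)
  ultimately show ?thesis by blast
qed


lemma TQp0_phi: assumes "t \<in> TQp n \<sigma> 0" shows "phiD p \<sigma> t i j - t i j = 0"
proof (cases "i = 0")
  case True then show ?thesis using assms unfolding TQp_def phiD_def by simp
next
  case False then show ?thesis using assms unfolding TQp_def phiD_def by (simp add: s0)
qed

lemma L_fixed2: assumes x: "x \<in> Dsp n" and e: "\<forall>i j. (0::'k) - 0 = phiD p \<sigma> x i j - x i j"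
  shows "x \<in> TQp n \<sigma> 0"
  using L_fixed[OF x] e by simp

lemma C2: assumes cD: "c \<in> Dsp n" and c'D: "c' \<in> Dsp n"
  shows "cohomologous n Nm p \<sigma> \<iota> (F 0) (\<lambda>i j. 0) (\<lambda>i j. 0) c (\<lambda>i j. 0) (\<lambda>i j. 0) c'
        \<longleftrightarrow> (\<lambda>i j. c i j - c' i j) \<in> F 0"
proof
  assume "cohomologous n Nm p \<sigma> \<iota> (F 0) (\<lambda>i j. 0) (\<lambda>i j. 0) c (\<lambda>i j. 0) (\<lambda>i j. 0) c'"
  then obtain x g where x: "x \<in> Dsp n" and g: "g \<in> F 0"
    and e1: "\<forall>i j. (0::'k) - 0 = phiD p \<sigma> x i j - x i j"
    and e2: "\<forall>i j. (0::'k) - 0 = ND n Nm x i j"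
    and e3: "\<forall>i j. c i j - c' i j = - extK \<iota> x i j + g i j"
    unfolding cohomologous_def coboundary_def by blast
  have T: "x \<in> TQp n \<sigma> 0" by (rule L_fixed2[OF x e1])
  have x0: "x 0 k = 0" for k by (rule L_transfer[OF x]) (use e2 in simp)
  have "x i k = 0" for i k using T x0 unfolding TQp_def by (cases "i = 0") auto
  then have "(\<lambda>i j. c i j - c' i j) = g" using e3 unfolding extK_def by (simp add: i0 fun_eq_iff)
  then show "(\<lambda>i j. c i j - c' i j) \<in> F 0" using g by simp
next
  assume "(\<lambda>i j. c i j - c' i j) \<in> F 0"
  then show "cohomologous n Nm p \<sigma> \<iota> (F 0) (\<lambda>i j. 0) (\<lambda>i j. 0) c (\<lambda>i j. 0) (\<lambda>i j. 0) c'"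
    unfolding cohomologous_def coboundary_def
    by (intro bexI[of _ "\<lambda>i j. 0"] bexI[of _ "\<lambda>i j. c i j - c' i j"])
       (auto simp: phiD_def ND_zero extK_def i0 s0 Dsp_def)
qed

lemma C5: assumes "cohomologous n Nm p \<sigma> \<iota> (F 0) (\<lambda>i j. 0) y c (\<lambda>i j. 0) y' c'"
  shows "(\<exists>t\<in>TQp n \<sigma> 0. \<forall>j. y (-1) j - y' (-1) j = ND n Nm t (-1) j) \<and>
        (\<exists>g\<in>F 0. \<exists>t\<in>TQp n \<sigma> 0. \<forall>i j. c i j - c' i j = g i j + extK \<iota> t i j)"
proof -
  obtain x g where x: "x \<in> Dsp n" and g: "g \<in> F 0"
    and e1: "\<forall>i j. (0::'k) - 0 = phiD p \<sigma> x i j - x i j"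
    and e2: "\<forall>i j. y i j - y' i j = ND n Nm x i j"
    and e3: "\<forall>i j. c i j - c' i j = - extK \<iota> x i j + g i j"
    using assms unfolding cohomologous_def coboundary_def by blast
  have T: "x \<in> TQp n \<sigma> 0" by (rule L_fixed2[OF x e1])
  have T': "(\<lambda>i j. - x i j) \<in> TQp n \<sigma> 0"
    using T unfolding TQp_def Dsp_def by (auto simp: hminus[OF ihom_sig])
  have "\<forall>i j. c i j - c' i j = g i j + extK \<iota> (\<lambda>i j. - x i j) i j"
    using e3 unfolding extK_def by (simp add: ineg)
  then show ?thesis using T T' e2 g by blast
qed

lemma C6: assumes u: "u \<in> TQp n \<sigma> (-1)"
  shows "\<exists>y c. cocycle n Nm p \<sigma> (\<lambda>i j. 0) y c \<and> (\<lambda>i j. if i = -1 then y i j else 0) = u"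
proof (intro exI conjI)
  have uD: "u \<in> Dsp n" and uz: "\<And>i j. i \<noteq> -1 \<Longrightarrow> u i j = 0" and us: "\<And>j. \<sigma> (u (-1) j) = u (-1) j"
    using u unfolding TQp_def by auto
  show "cocycle n Nm p \<sigma> (\<lambda>i j. 0) u (\<lambda>i j. 0)"
    unfolding cocycle_def ND_zero
  proof (intro conjI allI)
    show "(\<lambda>i j. 0) \<in> Dsp n" unfolding Dsp_def by simp
    show "(\<lambda>i j. 0) \<in> Dsp n" unfolding Dsp_def by simp
    show "u \<in> Dsp n" by (rule uD)
    fix i j
    show "0 + u i j - of_nat p * phiD p \<sigma> u i j = 0"
    proof (cases "i = -1")
      case True
      then show ?thesis using us[of j] lam_m1 unfolding phiD_def by (simp add: mult.assoc[symmetric])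
    next
      case False
      then show ?thesis using uz[OF False] unfolding phiD_def by (simp add: s0)
    qed
  qed
  show "(\<lambda>i j. if i = -1 then u i j else 0) = u" using uz by (auto simp: fun_eq_iff)
qed

lemma C4: assumes coc: "cocycle n Nm p \<sigma> (\<lambda>i j. 0) y c"
  shows "(\<lambda>i j. if i = -1 then y i j else 0) \<in> TQp n \<sigma> (-1) \<and>
        coboundary n Nm p \<sigma> \<iota> (F 0) (\<lambda>i j. 0) (\<lambda>i j. if i = -1 then 0 else y i j) (\<lambda>i j. 0)"
proof
  have yD: "y \<in> Dsp n" using coc unfolding cocycle_def by blast
  note L = L_cocy0[OF coc]
  show "(\<lambda>i j. if i = -1 then y i j else 0) \<in> TQp n \<sigma> (-1)"
    using yD L(2) unfolding TQp_def Dsp_def by auto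
  show "coboundary n Nm p \<sigma> \<iota> (F 0) (\<lambda>i j. 0) (\<lambda>i j. if i = -1 then 0 else y i j) (\<lambda>i j. 0)"
    unfolding coboundary_def
    using L(1) F0 by (intro bexI[of _ "\<lambda>i j. 0"]) (auto simp: phiD_def ND_zero extK_def i0 s0 Dsp_def)
qed

lemma C7: assumes coc: "cocycle n Nm p \<sigma> (\<lambda>i j. 0) y c"
  shows "(\<exists>t\<in>TQp n \<sigma> 0. \<forall>j. y (-1) j = ND n Nm t (-1) j) \<longleftrightarrow>
         (\<exists>c'\<in>Dsp n. cohomologous n Nm p \<sigma> \<iota> (F 0) (\<lambda>i j. 0) y c (\<lambda>i j. 0) (\<lambda>i j. 0) c')"
proof
  assume "\<exists>t\<in>TQp n \<sigma> 0. \<forall>j. y (-1) j = ND n Nm t (-1) j"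
  then obtain t where t: "t \<in> TQp n \<sigma> 0" and ty: "\<forall>j. y (-1) j = ND n Nm t (-1) j" by blast
  have tD: "t \<in> Dsp n" using t unfolding TQp_def by blast
  have cD: "c \<in> Dsp n" using coc unfolding cocycle_def by blast
  note L = L_cocy0[OF coc]
  have yN: "y i j = ND n Nm t i j" for i j
  proof (cases "i = -1")
    case True then show ?thesis using ty by simp
  next
    case False then show ?thesis using L(1) L_ND_T0[OF t False] by simp
  qed
  show "\<exists>c'\<in>Dsp n. cohomologous n Nm p \<sigma> \<iota> (F 0) (\<lambda>i j. 0) y c (\<lambda>i j. 0) (\<lambda>i j. 0) c'"
  proof (intro bexI)
    show "(\<lambda>i j. c i j + extK \<iota> t i j) \<in> Dsp n"
      using cD tD unfolding Dsp_def extK_def by (simp add: i0)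
    show "cohomologous n Nm p \<sigma> \<iota> (F 0) (\<lambda>i j. 0) y c (\<lambda>i j. 0) (\<lambda>i j. 0) (\<lambda>i j. c i j + extK \<iota> t i j)"
      unfolding cohomologous_def coboundary_def
      using tD F0 TQp0_phi[OF t] yN by (intro bexI[of _ t] bexI[of _ "\<lambda>i j. 0"]) auto
  qed
next
  assume "\<exists>c'\<in>Dsp n. cohomologous n Nm p \<sigma> \<iota> (F 0) (\<lambda>i j. 0) y c (\<lambda>i j. 0) (\<lambda>i j. 0) c'"
  then obtain c' x g where x: "x \<in> Dsp n"
    and e1: "\<forall>i j. (0::'k) - 0 = phiD p \<sigma> x i j - x i j"
    and e2: "\<forall>i j. y i j - 0 = ND n Nm x i j"
    unfolding cohomologous_def coboundary_def by blast
  have T: "x \<in> TQp n \<sigma> 0" by (rule L_fixed2[OF x e1])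
  then show "\<exists>t\<in>TQp n \<sigma> 0. \<forall>j. y (-1) j = ND n Nm t (-1) j" using e2 by auto
qed

end
end

theorem proposition4p2:
  fixes p :: nat and av :: "'k::field_char_0 \<Rightarrow> real" and \<sigma> :: "'k \<Rightarrow> 'k"
    and \<iota> :: "'k \<Rightarrow> 'K::field"
    and n :: "int \<Rightarrow> nat" and Nm :: "int \<Rightarrow> nat \<Rightarrow> nat \<Rightarrow> int"
    and F :: "int \<Rightarrow> (int \<Rightarrow> nat \<Rightarrow> 'K) set"
  assumes K0: "unramified_padic p av \<sigma>"
    and K: "max_unram_in av \<iota>"
    and fin: "finite {i. n i \<noteq> 0}"
    and Ninj: "\<forall>v::nat \<Rightarrow> rat. (\<forall>j<n (-1). (\<Sum>k<n 0. of_int (Nm 0 j k) * v k) = 0)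
                  \<longrightarrow> (\<forall>k<n 0. v k = 0)"
    and Fil: "filtration n F"
  shows
    \<comment> \<open>the first map c |-> [(0,0,c)] is well defined and injective on D_K/F^0\<close>
    "(\<forall>c\<in>Dsp n. cocycle n Nm p \<sigma> (\<lambda>i j. 0) (\<lambda>i j. 0) c) \<and>
     (\<forall>c\<in>Dsp n. \<forall>c'\<in>Dsp n.
        cohomologous n Nm p \<sigma> \<iota> (F 0) (\<lambda>i j. 0) (\<lambda>i j. 0) c (\<lambda>i j. 0) (\<lambda>i j. 0) c'
        \<longleftrightarrow> (\<lambda>i j. c i j - c' i j) \<in> F 0) \<and>
     \<comment> \<open>every class has a representative of the form (0,y,c)\<close>
     (\<forall>a b c. cocycle n Nm p \<sigma> a b c \<longrightarrow>
        (\<exists>y c'. cocycle n Nm p \<sigma> (\<lambda>i j. 0) y c' \<and>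
               cohomologous n Nm p \<sigma> \<iota> (F 0) a b c (\<lambda>i j. 0) y c')) \<and>
     \<comment> \<open>for such a representative the D^-1-component of y lies in T^-1 \<otimes> Q_p and the
         other components give a coboundary\<close>
     (\<forall>y c. cocycle n Nm p \<sigma> (\<lambda>i j. 0) y c \<longrightarrow>
        (\<lambda>i j. if i = -1 then y i j else 0) \<in> TQp n \<sigma> (-1) \<and>
        coboundary n Nm p \<sigma> \<iota> (F 0) (\<lambda>i j. 0) (\<lambda>i j. if i = -1 then 0 else y i j) (\<lambda>i j. 0)) \<and>
     \<comment> \<open>well-definedness of the second map (to (T^-1/N T^0) \<otimes> Q_p) and of the map
         H^1 -> D_K/(F^0 + T^0 \<otimes> Q_p)\<close>
     (\<forall>y c y' c'. cocycle n Nm p \<sigma> (\<lambda>i j. 0) y c \<and> cocycle n Nm p \<sigma> (\<lambda>i j. 0) y' c' \<and>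
        cohomologous n Nm p \<sigma> \<iota> (F 0) (\<lambda>i j. 0) y c (\<lambda>i j. 0) y' c' \<longrightarrow>
        (\<exists>t\<in>TQp n \<sigma> 0. \<forall>j. y (-1) j - y' (-1) j = ND n Nm t (-1) j) \<and>
        (\<exists>f\<in>F 0. \<exists>t\<in>TQp n \<sigma> 0. \<forall>i j. c i j - c' i j = f i j + extK \<iota> t i j)) \<and>
     \<comment> \<open>surjectivity of the second map\<close>
     (\<forall>u\<in>TQp n \<sigma> (-1). \<exists>y c. cocycle n Nm p \<sigma> (\<lambda>i j. 0) y c \<and>
        (\<lambda>i j. if i = -1 then y i j else 0) = u) \<and>
     \<comment> \<open>exactness in the middle: kernel of the second map = image of the first\<close>
     (\<forall>y c. cocycle n Nm p \<sigma> (\<lambda>i j. 0) y c \<longrightarrow>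
        ((\<exists>t\<in>TQp n \<sigma> 0. \<forall>j. y (-1) j = ND n Nm t (-1) j) \<longleftrightarrow>
         (\<exists>c'\<in>Dsp n. cohomologous n Nm p \<sigma> \<iota> (F 0) (\<lambda>i j. 0) y c (\<lambda>i j. 0) (\<lambda>i j. 0) c')))"
  proof -
  interpret padic p av \<sigma> by (rule padic.intro[OF K0])
  obtain f where f1: "f \<ge> 1" and ford: "\<forall>x. (\<sigma>^^f) x = x" using sigma_finite_order by blast
  have ford': "\<And>x. (\<sigma>^^f) x = x" using ford by blast
  have iadd: "\<And>x y. \<iota> (x + y) = \<iota> x + \<iota> y" using K unfolding max_unram_in_def by blast
  have F0: "(\<lambda>i j. 0) \<in> F 0" using Fil unfolding filtration_def by blast
  note ctx = f1 ford' iadd Ninj F0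
  have A1: "\<forall>c\<in>Dsp n. cocycle n Nm p \<sigma> (\<lambda>i j. 0) (\<lambda>i j. 0) c"
    unfolding cocycle_def ND_zero phiD_def Dsp_def by (simp add: h0[OF ihom_sig])
  have A2: "\<forall>c\<in>Dsp n. \<forall>c'\<in>Dsp n.
        cohomologous n Nm p \<sigma> \<iota> (F 0) (\<lambda>i j. 0) (\<lambda>i j. 0) c (\<lambda>i j. 0) (\<lambda>i j. 0) c'
        \<longleftrightarrow> (\<lambda>i j. c i j - c' i j) \<in> F 0"
    using C2[where f=f and \<iota>=\<iota> and n=n and Nm=Nm and F=F, OF ctx] by blast
  have A3: "\<forall>a b c. cocycle n Nm p \<sigma> a b c \<longrightarrow>
        (\<exists>y c'. cocycle n Nm p \<sigma> (\<lambda>i j. 0) y c' \<and>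
               cohomologous n Nm p \<sigma> \<iota> (F 0) a b c (\<lambda>i j. 0) y c')"
    using L_rep[where f=f and \<iota>=\<iota> and n=n and Nm=Nm and F=F, OF ctx] by blast
  have A4: "\<forall>y c. cocycle n Nm p \<sigma> (\<lambda>i j. 0) y c \<longrightarrow>
        (\<lambda>i j. if i = -1 then y i j else 0) \<in> TQp n \<sigma> (-1) \<and>
        coboundary n Nm p \<sigma> \<iota> (F 0) (\<lambda>i j. 0) (\<lambda>i j. if i = -1 then 0 else y i j) (\<lambda>i j. 0)"
    using C4[where f=f and \<iota>=\<iota> and n=n and Nm=Nm and F=F, OF ctx] by blast
  have A5: "\<forall>y c y' c'. cocycle n Nm p \<sigma> (\<lambda>i j. 0) y c \<and> cocycle n Nm p \<sigma> (\<lambda>i j. 0) y' c' \<and>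
        cohomologous n Nm p \<sigma> \<iota> (F 0) (\<lambda>i j. 0) y c (\<lambda>i j. 0) y' c' \<longrightarrow>
        (\<exists>t\<in>TQp n \<sigma> 0. \<forall>j. y (-1) j - y' (-1) j = ND n Nm t (-1) j) \<and>
        (\<exists>f\<in>F 0. \<exists>t\<in>TQp n \<sigma> 0. \<forall>i j. c i j - c' i j = f i j + extK \<iota> t i j)"
    using C5[where f=f and \<iota>=\<iota> and n=n and Nm=Nm and F=F, OF ctx] by blast
  have A6: "\<forall>u\<in>TQp n \<sigma> (-1). \<exists>y c. cocycle n Nm p \<sigma> (\<lambda>i j. 0) y c \<and>
        (\<lambda>i j. if i = -1 then y i j else 0) = u"
    using C6[where f=f and \<iota>=\<iota> and n=n and Nm=Nm and F=F, OF ctx] by blast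
  have A7: "\<forall>y c. cocycle n Nm p \<sigma> (\<lambda>i j. 0) y c \<longrightarrow>
        ((\<exists>t\<in>TQp n \<sigma> 0. \<forall>j. y (-1) j = ND n Nm t (-1) j) \<longleftrightarrow>
         (\<exists>c'\<in>Dsp n. cohomologous n Nm p \<sigma> \<iota> (F 0) (\<lambda>i j. 0) y c (\<lambda>i j. 0) (\<lambda>i j. 0) c'))"
    using C7[where f=f and \<iota>=\<iota> and n=n and Nm=Nm and F=F, OF ctx] by blast
  show ?thesis by (intro conjI; (fact A1 | fact A2 | fact A3 | fact A4 | fact A5 | fact A6 | fact A7))
qed

end
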